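(* Let $k\neq0$ be an integer and $r=[2,2k,-2,-2]$. Then: (1) if $k<0$, every zero of $\Delta_{K(r)}(t)$ is real or of modulus $1$, and both real zeros and non-real zeros of modulus $1$ occur; (2) if $k\in\{1,2,3\}$, no zero of $\Delta_{K(r)}(t)$ is real or of modulus $1$; (3) if $k\ge4$, all zeros of $\Delta_{K(r)}(t)$ have modulus $1$.
   Context: For a finite sequence $r=[2a_1,2a_2,\dots,2a_n]$ of nonzero even integers, $K(r)$ denotes the 2-bridge knot or link whose associated rational number has the even continued fraction expansion $1/(2a_1-1/(2a_2-\cdots-1/(2a_n)))$. Let $M(r)$ be the $n\times n$ integer matrix whose $(k,k)$-entry is $a_k$, whose $(k,k+1)$-entry is $1$ ($1\le k\le n-1$), and whose other entries are $0$; $\Delta_{K(r)}(t)=\det(tM(r)-M(r)^T)$ is the (reduced) Alexander polynomial of $K(r)$ (up to sign). *)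

theory Defs
  imports "HOL-Computational_Algebra.Polynomial" "Jordan_Normal_Form.Determinant"
begin

definition seifert_mat :: "int list \<Rightarrow> int mat" where
  "seifert_mat r = mat (length r) (length r)
     (\<lambda>(i,j). if i = j then r ! i div 2 else if j = i + 1 then 1 else 0)"

text \<open>Alexander polynomial det(t M(r) - M(r)^T) as an integer polynomial in t.\<close>
definition alexander_poly :: "int list \<Rightarrow> int poly" where
  "alexander_poly r = det (mat (length r) (length r)
     (\<lambda>(i,j). [:0, seifert_mat r $$ (i,j):] - [:seifert_mat r $$ (j,i):]))"

definition complex_zeros :: "int poly \<Rightarrow> complex set" where
  "complex_zeros p = {z. poly (map_poly of_int p) z = 0}"

end

theory Submission
  imports Defs Complex_Main
begin

lemma det_mat_Suc:
  "det (mat (Suc n) (Suc n) f) = (\<Sum>i<Suc n. f(i,0) * ((-1)^i * det (mat n n (\<lambda>(i',j'). f(if i'<i then i' else Suc i', Suc j')))))"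
proof -
  have "det (mat (Suc n) (Suc n) f) = (\<Sum>i<Suc n. (mat (Suc n) (Suc n) f) $$ (i,0) * cofactor (mat (Suc n) (Suc n) f) i 0)"
    by (rule laplace_expansion_column) auto
  also have "\<dots> = (\<Sum>i<Suc n. f(i,0) * ((-1)^i * det (mat n n (\<lambda>(i',j'). f(if i'<i then i' else Suc i', Suc j')))))"
    apply (rule sum.cong[OF refl])
    apply (simp add: cofactor_def mat_delete_def)
    apply (rule arg_cong[where f="\<lambda>x. f _ * (_ * det x)"])
    apply (rule eq_matI) by auto
  finally show ?thesis .
qed

lemma det_mat_0: "det (mat 0 0 f) = 1" by (rule det_dim_zero) auto

lemma alex: "alexander_poly [2, 2*k, -2, -2] = [:k, -4*k+k, 6*k - 2*k + 1, -4*k+k, k:]"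
  unfolding alexander_poly_def seifert_mat_def
  by (simp add: det_mat_Suc det_mat_0 numeral_eq_Suc lessThan_Suc)

definition ff :: "real \<Rightarrow> complex \<Rightarrow> complex" where
  "ff K z = of_real K*(z-1)^4 + of_real K*z*(z-1)^2 + z^2"

lemma ff_s: assumes "z \<noteq> 0"
  shows "ff K z = z^2 * (of_real K * ((z-1)^2/z)^2 + of_real K*((z-1)^2/z) + 1)"
  using assms by (simp add: ff_def field_simps power2_eq_square power4_eq_xxxx)

lemma ff0: "ff K 0 = of_real K" by (simp add: ff_def)

lemma A: assumes "K > 0" "z \<in> \<real>" shows "ff K z \<noteq> 0"
proof -
  obtain x where x: "z = of_real x" using assms(2) by (auto elim: Reals_cases)
  have "ff K z = of_real (K*(x-1)^4 + K*x*(x-1)^2 + x^2)"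
    by (simp add: x ff_def)
  moreover have eq: "K*(x-1)^4 + K*x*(x-1)^2 + x^2 = K*((x-1)^2*((x-1/2)^2+3/4)) + x^2"
    by (simp add: power2_eq_square power4_eq_xxxx algebra_simps)
  moreover have "K*((x-1)^2*((x-1/2)^2+3/4)) + x^2 > 0"
  proof (cases "x = 0")
    case True then show ?thesis using assms by (simp add: power2_eq_square)
  next
    case False
    have "K*((x-1)^2*((x-1/2)^2+3/4)) \<ge> 0" using assms by simp
    moreover have "x^2 > 0" using False by simp
    ultimately show ?thesis by linarith
  qed
  ultimately show ?thesis by (metis of_real_eq_0_iff less_irrefl)
qed

lemma zinv: fixes z :: complex assumes "z \<noteq> 0" shows "(z-1)^2/z = z - 2 + inverse z"
proof -
  have "(z-1)^2 = z*(z - 2 + inverse z)" using assms by (simp add: power2_eq_square algebra_simps)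
  then show ?thesis using assms by simp
qed

lemma B: assumes "K > 0" "K < 4" "cmod z = 1" shows "ff K z \<noteq> 0"
proof
  assume f: "ff K z = 0"
  have z0: "z \<noteq> 0" using assms by auto
  have "z * cnj z = 1" using complex_norm_square[of z] assms(3) by simp
  then have inv: "inverse z = cnj z" by (rule inverse_unique)
  have "(z-1)^2/z = z - 2 + inverse z" using zinv[OF z0] .
  also have "\<dots> = of_real (2*Re z - 2)" using inv by (simp add: complex_eq_iff)
  finally have s: "(z-1)^2/z = of_real (2*Re z - 2)" .
  define \<sigma> where "\<sigma> = 2*Re z - 2"
  have "z^2 * (of_real K * (of_real \<sigma>)^2 + of_real K*of_real \<sigma> + 1) = 0"
    using f ff_s[OF z0, of K] unfolding s \<sigma>_def by simp
  then have "of_real K * (of_real \<sigma>)^2 + of_real K*of_real \<sigma> + 1 = (0::complex)"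
    using z0 by simp
  then have "of_real (K*\<sigma>^2 + K*\<sigma> + 1) = (0::complex)" by simp
  then have e: "K*\<sigma>^2 + K*\<sigma> + 1 = 0" by (simp only: of_real_eq_0_iff)
  have "K*\<sigma>^2 + K*\<sigma> + 1 = K*(\<sigma>+1/2)^2 + (1 - K/4)" by (simp add: algebra_simps power2_eq_square)
  moreover have "K*(\<sigma>+1/2)^2 \<ge> 0" using assms by simp
  ultimately show False using e assms by linarith
qed

lemma sq_real: assumes "q^2 = (of_real D :: complex)" "D \<ge> 0" shows "q \<in> \<real>"
proof -
  define a where "a = (of_real (sqrt D) :: complex)"
  have a2: "a^2 = of_real D" using assms(2) unfolding a_def by (simp flip: of_real_power)
  have "(q - a)*(q+a) = q^2 - a^2" by (simp add: algebra_simps power2_eq_square)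
  also have "\<dots> = 0" using assms(1) a2 by simp
  finally have "q - a = 0 \<or> q + a = 0" by simp
  then have "q = a \<or> q = -a" by (auto simp: add_eq_0_iff2)
  then show ?thesis unfolding a_def by auto
qed

lemma C: assumes "K < 0 \<or> K \<ge> 4" "ff K z = 0" shows "z \<in> \<real> \<or> cmod z = 1"
proof -
  have K0: "K \<noteq> 0" using assms by auto
  have z0: "z \<noteq> 0" using assms K0 ff0 by auto
  define s where "s = (z-1)^2/z"
  have "z^2 * (of_real K * s^2 + of_real K*s + 1) = 0"
    using assms(2) ff_s[OF z0, of K] unfolding s_def by simp
  then have e: "of_real K * s^2 + of_real K*s + 1 = 0" using z0 by simp
  have "(2*of_real K*s + of_real K)^2 = 4*of_real K*(of_real K * s^2 + of_real K*s + 1) + (of_real K)^2 - 4*of_real K"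
    by (simp add: algebra_simps power2_eq_square)
  also have "\<dots> = of_real (K^2 - 4*K)" using e by simp
  finally have sq: "(2*of_real K*s + of_real K)^2 = of_real (K^2 - 4*K)" .
  have "K^2 - 4*K \<ge> 0"
  proof (cases "K < 0")
    case True then have "K^2 \<ge> 0" by simp
    then show ?thesis using True by linarith
  next
    case False then have "K \<ge> 4" using assms by auto
    then have "K*K \<ge> 4*K" by (simp add: mult_right_mono)
    then show ?thesis by (simp add: power2_eq_square)
  qed
  then have qR: "2*of_real K*s + of_real K \<in> \<real>" using sq sq_real by blast
  have "s = (2*of_real K*s + of_real K - of_real K) / (2*of_real K)" using K0 by simp
  also have "\<dots> \<in> \<real>" using qR by (intro Reals_divide Reals_diff) auto
  finally have sR: "s \<in> \<real>" .
  have "z + inverse z = s + 2" using zinv[OF z0] unfolding s_def by simp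
  also have "\<dots> \<in> \<real>" using sR by auto
  finally have "Im (z + inverse z) = 0" using complex_is_Real_iff by blast
  moreover have "Im (z + inverse z) = Im z - Im z / ((Re z)^2 + (Im z)^2)" by simp
  moreover have "Im z - Im z / ((Re z)^2 + (Im z)^2) = Im z * (1 - 1/((Re z)^2 + (Im z)^2))"
    by (simp add: algebra_simps)
  ultimately have "Im z = 0 \<or> 1/((Re z)^2 + (Im z)^2) = 1" by simp
  then show ?thesis
  proof
    assume "Im z = 0" then show ?thesis using complex_is_Real_iff by blast
  next
    assume "1/((Re z)^2 + (Im z)^2) = 1"
    then have "(Re z)^2 + (Im z)^2 = 1" by (simp add: divide_eq_1_iff)
    then show ?thesis by (simp add: cmod_def)
  qed
qed

lemma D1: assumes "K < 0" shows "\<exists>z. z \<in> \<real> \<and> ff K z = 0"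
proof -
  define g where "g x = K*(x-1)^4 + K*x*(x-1)^2 + x^2" for x :: real
  have "\<exists>x. 0 \<le> x \<and> x \<le> 1 \<and> g x = 0"
    by (rule IVT') (use assms in \<open>auto simp: g_def intro!: continuous_intros\<close>)
  then obtain x where "g x = 0" by blast
  moreover have "ff K (of_real x) = of_real (g x)" by (simp add: ff_def g_def)
  ultimately show ?thesis by (intro exI[of _ "of_real x"]) auto
qed

lemma D2: assumes "K \<le> -1" shows "\<exists>z. z \<notin> \<real> \<and> cmod z = 1 \<and> ff K z = 0"
proof -
  define h where "h c = K*(2*c-2)^2 + K*(2*c-2) + 1" for c :: real
  have "\<exists>c. -1 \<le> c \<and> c \<le> 1 \<and> h c = 0"
    by (rule IVT') (use assms in \<open>auto simp: h_def intro!: continuous_intros\<close>)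
  then obtain c where c: "-1 \<le> c" "c \<le> 1" "h c = 0" by blast
  have "c \<noteq> 1" using c by (auto simp: h_def)
  moreover have "c \<noteq> -1" using c assms by (auto simp: h_def)
  ultimately have "c < 1" "-1 < c" using c by auto
  then have "(1-c)*(1+c) > 0" by simp
  then have c2: "c*c < 1" by (simp add: algebra_simps)
  define y where "y = sqrt (1 - c*c)"
  have yy: "y*y = 1 - c*c" using c2 unfolding y_def by simp
  have y0: "y > 0" using c2 unfolding y_def by simp
  define z where "z = Complex c y"
  have nr: "z \<notin> \<real>" using y0 complex_is_Real_iff unfolding z_def by force
  have m: "cmod z = 1" using yy by (simp add: z_def cmod_def power2_eq_square)
  define w where "w = (of_real (2*c-2) :: complex)"
  have q1: "Re ((z-1)^2) = Re (z*w)"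
  proof -
    have "Re ((z-1)^2) = (c-1)*(c-1) - y*y" by (simp add: z_def power2_eq_square)
    also have "\<dots> = c*(2*c-2)" using yy by (simp add: algebra_simps)
    also have "\<dots> = Re (z*w)" by (simp add: z_def w_def)
    finally show ?thesis .
  qed
  have q2: "Im ((z-1)^2) = Im (z*w)"
    by (simp add: z_def w_def power2_eq_square algebra_simps)
  have q: "(z-1)^2 = z*w" using q1 q2 by (simp add: complex_eq_iff)
  have hw: "of_real (h c) = of_real K * w^2 + of_real K * w + 1" by (simp add: h_def w_def)
  have "ff K z = of_real K*((z-1)^2)^2 + of_real K*z*(z-1)^2 + z^2"
    by (simp add: ff_def flip: power_mult)
  also have "\<dots> = z^2 * (of_real K * w^2 + of_real K * w + 1)" unfolding q
    by (simp add: algebra_simps power2_eq_square)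
  finally have "ff K z = 0" using hw c by simp
  then show ?thesis using nr m by auto
qed


lemma Z_iff: "z \<in> complex_zeros (alexander_poly [2, 2*k, -2, -2]) \<longleftrightarrow> ff (of_int k) z = 0"
proof -
  have "poly (map_poly of_int (alexander_poly [2, 2*k, -2, -2])) z = ff (of_int k) z"
    unfolding alex ff_def
    by (simp add: map_poly_pCons algebra_simps power2_eq_square power4_eq_xxxx)
  then show ?thesis unfolding complex_zeros_def by simp
qed

theorem proposition12p2:
  fixes k :: int
  assumes "k \<noteq> 0"
  defines "Z \<equiv> complex_zeros (alexander_poly [2, 2*k, -2, -2])"
  shows "(k < 0 \<longrightarrow>
            (\<forall>z\<in>Z. z \<in> \<real> \<or> cmod z = 1) \<and>
            (\<exists>z\<in>Z. z \<in> \<real>) \<and>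
            (\<exists>z\<in>Z. z \<notin> \<real> \<and> cmod z = 1))
       \<and> (k \<in> {1, 2, 3} \<longrightarrow> (\<forall>z\<in>Z. z \<notin> \<real> \<and> cmod z \<noteq> 1))
       \<and> (4 \<le> k \<longrightarrow> (\<forall>z\<in>Z. cmod z = 1))"
proof (intro conjI impI)
  have ZI: "z \<in> Z \<longleftrightarrow> ff (of_int k) z = 0" for z unfolding Z_def by (rule Z_iff)
  {
    assume k: "k < 0"
    then have K: "real_of_int k < 0" "real_of_int k \<le> -1" by auto
    show "\<forall>z\<in>Z. z \<in> \<real> \<or> cmod z = 1" using C K(1) ZI by blast
    show "\<exists>z\<in>Z. z \<in> \<real>" using D1[OF K(1)] ZI by blast
    show "\<exists>z\<in>Z. z \<notin> \<real> \<and> cmod z = 1" using D2[OF K(2)] ZI by blast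
  }
  {
    assume k: "k \<in> {1, 2, 3}"
    then have K: "real_of_int k > 0" "real_of_int k < 4" by auto
    show "\<forall>z\<in>Z. z \<notin> \<real> \<and> cmod z \<noteq> 1" using A[OF K(1)] B[OF K] ZI by blast
  }
  {
    assume k: "4 \<le> k"
    then have K: "real_of_int k > 0" "real_of_int k \<ge> 4" by auto
    show "\<forall>z\<in>Z. cmod z = 1" using A[OF K(1)] C[of "real_of_int k"] K(2) ZI by blast
  }
qed

end
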